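(* Let $S$ be an expanding automaton semigroup over an alphabet $\Sigma$ (i.e. $S=S(\mathcal{A})$ for an expanding automaton $\mathcal{A}$ over $\Sigma$), and let $P_\Sigma$ be the set of primes dividing $|\Sigma|!$. If $s\in S$ satisfies $s^m=s^n$ for some $m<n$ with $s,s^2,\dots,s^{n-1}$ pairwise distinct, then every prime divisor of $n-m$ lies in $P_\Sigma$.
   Context: An expanding automaton is a quadruple $\mathcal{A}=(Q,\Sigma,t,o)$ with $Q$ a finite set of states, $\Sigma$ a finite alphabet, $t:Q\times\Sigma\to Q$ and $o:Q\times\Sigma\to\Sigma^+$. Each state $q$ induces $q:\Sigma^*\to\Sigma^*$ by $q(\emptyset)=\emptyset$ and $q(\sigma w)=o(q,\sigma)\,q'(w)$ with $q'=t(q,\sigma)$. $S(\mathcal{A})$ is the semigroup of maps $\Sigma^*\to\Sigma^*$ generated under composition by the states. *)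

theory Defs
  imports "HOL-Computational_Algebra.Primes"
begin

text \<open>An automaton with state type 'q (Q = UNIV, finite) over alphabet type 'a
(Sigma = UNIV, finite), transition tr and output out.  It is expanding if
every output word is nonempty.\<close>

definition expanding :: "('q \<Rightarrow> 'a \<Rightarrow> 'a list) \<Rightarrow> bool" where
  "expanding out \<longleftrightarrow> (\<forall>q x. out q x \<noteq> [])"

fun amap :: "('q \<Rightarrow> 'a \<Rightarrow> 'q) \<Rightarrow> ('q \<Rightarrow> 'a \<Rightarrow> 'a list) \<Rightarrow> 'q \<Rightarrow> 'a list \<Rightarrow> 'a list" where
  "amap tr out q [] = []"
| "amap tr out q (x # w) = out q x @ amap tr out (tr q x) w"

inductive_set aut_sg :: "('q \<Rightarrow> 'a \<Rightarrow> 'q) \<Rightarrow> ('q \<Rightarrow> 'a \<Rightarrow> 'a list) \<Rightarrow> ('a list \<Rightarrow> 'a list) set"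
  for tr out where
  gen: "amap tr out q \<in> aut_sg tr out"
| comp: "f \<in> aut_sg tr out \<Longrightarrow> g \<in> aut_sg tr out \<Longrightarrow> f \<circ> g \<in> aut_sg tr out"

end

theory Submission
  imports Defs
begin

definition lgood :: "('a list \<Rightarrow> 'a list) \<Rightarrow> bool" where
  "lgood f \<longleftrightarrow> (\<forall>w. length w \<le> length (f w))"

definition good :: "('a list \<Rightarrow> 'a list) \<Rightarrow> bool" where
  "good f \<longleftrightarrow> lgood f \<and> (\<forall>u w. \<exists>g. f (u @ w) = f u @ g w \<and> lgood g)"

lemma amap_len:
  assumes "expanding out"
  shows "length w \<le> length (amap tr out q w)"
proof (induction w arbitrary: q)
  case Nil then show ?case by simp
next
  case (Cons x w)
  have "out q x \<noteq> []" using assms by (simp add: expanding_def)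
  then have "1 \<le> length (out q x)" by (cases "out q x") auto
  with Cons[of "tr q x"] show ?case by simp
qed

lemma amap_app: "\<exists>q'. amap tr out q (u @ w) = amap tr out q u @ amap tr out q' w"
  by (induction u arbitrary: q) auto

lemma good_aut:
  assumes "expanding out" "f \<in> aut_sg tr out"
  shows "good f"
  using assms(2)
proof induction
  case (gen q)
  show ?case unfolding good_def lgood_def
  proof (intro conjI allI)
    fix w show "length w \<le> length (amap tr out q w)" using amap_len[OF assms(1)] .
  next
    fix u w
    obtain q' where "amap tr out q (u @ w) = amap tr out q u @ amap tr out q' w"
      using amap_app[of tr out q u w] by blast
    then show "\<exists>g. amap tr out q (u @ w) = amap tr out q u @ g w \<and> (\<forall>w. length w \<le> length (g w))"
      using amap_len[OF assms(1)] by blast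
  qed
next
  case (comp f g)
  show ?case unfolding good_def
  proof (intro conjI allI)
    have h: "\<forall>w. length w \<le> length (g w)" "\<forall>w. length w \<le> length (f w)"
      using comp.IH unfolding good_def lgood_def by auto
    show "lgood (f \<circ> g)" unfolding lgood_def comp_apply
    proof
      fix w show "length w \<le> length (f (g w))" using h(1)[rule_format, of w] h(2)[rule_format, of "g w"] by simp
    qed
  next
    fix u w
    obtain g' where g': "g (u @ w) = g u @ g' w" "lgood g'"
      using comp.IH(2) unfolding good_def by blast
    obtain f' where f': "f (g u @ g' w) = f (g u) @ f' (g' w)" "lgood f'"
      using comp.IH(1) unfolding good_def by blast
    have "(f \<circ> g) (u @ w) = (f \<circ> g) u @ (f' \<circ> g') w \<and> lgood (f' \<circ> g')"
      using g' f' unfolding lgood_def by (auto intro: le_trans)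
    then show "\<exists>h. (f \<circ> g) (u @ w) = (f \<circ> g) u @ h w \<and> lgood h" by blast
  qed
qed

lemma good_take:
  assumes "good f" "length (f y) = length y"
  shows "take l (f y) = f (take l y)"
proof (cases "length y \<le> l")
  case True then show ?thesis using assms(2) by simp
next
  case False
  obtain g where g: "f (take l y @ drop l y) = f (take l y) @ g (drop l y)" "lgood g"
    using assms(1) unfolding good_def by blast
  have "length (take l y) \<le> length (f (take l y))"
    using assms(1) unfolding good_def lgood_def by blast
  moreover have "length (drop l y) \<le> length (g (drop l y))" using g(2) unfolding lgood_def by blast
  moreover have "length (f y) = length (f (take l y)) + length (g (drop l y))"
    using g(1) by simp
  moreover have "length (take l y) = l" "length (drop l y) = length y - l" using False by auto
  ultimately have "length (f (take l y)) = l" using False assms(2) by linarith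
  then show ?thesis using g(1) by simp
qed

lemma periodic_mult: "(f ^^ a) x = x \<Longrightarrow> (f ^^ (a * N)) x = x"
proof (induction N)
  case 0 then show ?case by simp
next
  case (Suc N)
  have "(f ^^ (a * Suc N)) x = (f ^^ a) ((f ^^ (a * N)) x)"
    by (simp add: funpow_add add.commute)
  then show ?case using Suc by simp
qed

lemma periodic_gcd:
  assumes "(f ^^ a) x = x" "(f ^^ b) x = x" "a \<noteq> 0"
  shows "(f ^^ (gcd a b)) x = x"
proof -
  obtain u v where uv: "a * u = b * v + gcd a b" using bezout_nat[OF assms(3), of b] by blast
  have "(f ^^ (gcd a b)) x = (f ^^ (gcd a b)) ((f ^^ (b * v)) x)"
    using periodic_mult[OF assms(2)] by simp
  also have "\<dots> = (f ^^ (gcd a b + b * v)) x" by (simp only: funpow_add comp_apply)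
  also have "\<dots> = (f ^^ (a * u)) x" using uv by (simp add: add.commute)
  also have "\<dots> = x" using periodic_mult[OF assms(1)] by simp
  finally show ?thesis .
qed

lemma fix_iter: "g u = u \<Longrightarrow> (g ^^ j) u = u"
  by (induction j) auto

lemma keyA:
  fixes g :: "'a::finite list \<Rightarrow> 'a list"
  assumes X: "\<And>y. y \<in> X \<Longrightarrow> g y \<in> X \<and> length (g y) = length y \<and> (\<forall>l. take l (g y) = g (take l y))"
    and p: "prime p" "card (UNIV :: 'a set) < p" and v: "v \<in> X" and per: "(g ^^ p) v = v"
  shows "g v = v"
proof -
  have it: "(g ^^ j) y \<in> X \<and> length ((g ^^ j) y) = length y \<and> (\<forall>l. take l ((g ^^ j) y) = (g ^^ j) (take l y))"
    if "y \<in> X" for y j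
  proof (induction j)
    case 0 then show ?case using that by simp
  next
    case (Suc j)
    then show ?case using X[of "(g ^^ j) y"] by simp
  qed
  have main: "take l (g v) = take l v" for l
  proof (induction l)
    case 0 then show ?case by simp
  next
    case (Suc l)
    define u where "u = take l v"
    have "take l (g v) = g (take l v)" using X[OF v] by blast
    then have gu: "g u = u" using Suc.IH unfolding u_def by simp
    show ?case
    proof (cases "length v \<le> l")
      case True
      then have "g v = v" using Suc X[OF v] by simp
      then show ?thesis by simp
    next
      case False
      define z where "z = take (Suc l) v"
      define Y where "Y = (\<lambda>c. u @ [c]) ` (UNIV :: 'a set)"
      have inY: "(g ^^ j) z \<in> Y" for j
      proof -
        have e1: "(g ^^ j) z = take (Suc l) ((g ^^ j) v)" using it[OF v, of j] unfolding z_def by auto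
        have lj: "length ((g ^^ j) v) = length v" using it[OF v] by blast
        have len: "length ((g ^^ j) z) = Suc l" using e1 lj False by (simp add: min_def)
        have "take l ((g ^^ j) z) = take l ((g ^^ j) v)" using e1 by simp
        also have "\<dots> = (g ^^ j) u" using it[OF v, of j] unfolding u_def by auto
        also have "\<dots> = u" using fix_iter[of g u j, OF gu] .
        finally have tk: "take l ((g ^^ j) z) = u" .
        have "length (drop l ((g ^^ j) z)) = 1" using len by simp
        then obtain c where c: "drop l ((g ^^ j) z) = [c]"
          by (cases "drop l ((g ^^ j) z)") auto
        have "(g ^^ j) z = u @ [c]"
          using tk c append_take_drop_id[of l "(g ^^ j) z"] by simp
        then show ?thesis unfolding Y_def by blast
      qed
      have cY: "card Y \<le> card (UNIV :: 'a set)" unfolding Y_def by (rule card_image_le) simp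
      have "\<not> inj_on (\<lambda>j. (g ^^ j) z) {0..card (UNIV :: 'a set)}"
      proof
        assume "inj_on (\<lambda>j. (g ^^ j) z) {0..card (UNIV :: 'a set)}"
        then have "card {0..card (UNIV :: 'a set)} \<le> card Y"
          by (rule card_inj_on_le) (use inY in \<open>auto simp: Y_def\<close>)
        with cY show False by simp
      qed
      then obtain i j where ij: "i < j" "j \<le> card (UNIV :: 'a set)" "(g ^^ i) z = (g ^^ j) z"
      proof -
        obtain i0 j0 where h: "i0 \<le> card (UNIV :: 'a set)" "j0 \<le> card (UNIV :: 'a set)"
          "(g ^^ i0) z = (g ^^ j0) z" "i0 \<noteq> j0"
          using \<open>\<not> inj_on _ _\<close> unfolding inj_on_def by auto
        show ?thesis
        proof (cases "i0 < j0")
          case True then show ?thesis using h that[of i0 j0] by auto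
        next
          case False then show ?thesis using h that[of j0 i0] by auto
        qed
      qed
      define t where "t = j - i"
      have t: "0 < t" "t < p" using ij p(2) unfolding t_def by auto
      have zp: "(g ^^ p) z = z" using it[OF v, of p] per unfolding z_def by auto
      have zpi: "(g ^^ (p * i)) z = z" using periodic_mult[OF zp] .
      have "p \<ge> 1" using p(1) prime_ge_1_nat by blast
      then have pi: "p * i \<ge> i" by simp
      have "(g ^^ t) z = (g ^^ t) ((g ^^ (p * i)) z)" using zpi by simp
      also have "\<dots> = (g ^^ (p * i - i)) ((g ^^ (t + i)) z)"
      proof -
        have e: "t + p * i = (p * i - i) + (t + i)" using pi by simp
        have "(g ^^ t) ((g ^^ (p * i)) z) = (g ^^ (t + p * i)) z" by (simp only: funpow_add comp_apply)
        also have "\<dots> = (g ^^ ((p * i - i) + (t + i))) z" by (simp only: e)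
        also have "\<dots> = (g ^^ (p * i - i)) ((g ^^ (t + i)) z)" by (simp only: funpow_add comp_apply)
        finally show ?thesis .
      qed
      also have "\<dots> = (g ^^ (p * i - i)) ((g ^^ i) z)" using ij unfolding t_def by simp
      also have "\<dots> = (g ^^ (p * i)) z"
      proof -
        have e: "p * i = (p * i - i) + i" using pi by simp
        have "(g ^^ (p * i - i)) ((g ^^ i) z) = (g ^^ ((p * i - i) + i)) z" by (simp only: funpow_add comp_apply)
        also have "\<dots> = (g ^^ (p * i)) z" by (simp only: e[symmetric])
        finally show ?thesis .
      qed
      also have "\<dots> = z" by (rule zpi)
      finally have zt: "(g ^^ t) z = z" .
      have "coprime t p"
      proof -
        have "\<not> p dvd t" using t by (auto dest: dvd_imp_le)
        then have "coprime p t" using p(1) by (simp add: prime_imp_coprime)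
        then show ?thesis by (simp add: coprime_commute)
      qed
      then have "gcd t p = 1" by simp
      then have "g z = z" using periodic_gcd[OF zt zp] t by simp
      moreover have "take (Suc l) (g v) = g z" using X[OF v] unfolding z_def by blast
      ultimately show ?thesis unfolding z_def by simp
    qed
  qed
  show ?thesis using main[of "length v"] X[OF v] by simp
qed

lemma iter_props:
  assumes X: "\<And>y. y \<in> X \<Longrightarrow> g y \<in> X \<and> length (g y) = length y \<and> (\<forall>l. take l (g y) = g (take l y))"
  shows "y \<in> X \<Longrightarrow> (g ^^ j) y \<in> X \<and> length ((g ^^ j) y) = length y \<and> (\<forall>l. take l ((g ^^ j) y) = (g ^^ j) (take l y))"
proof (induction j arbitrary: y)
  case 0 then show ?case by simp
next
  case (Suc j)
  then show ?case using X[of "(g ^^ j) y"] by simp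
qed

lemma len_mono:
  assumes "lgood s"
  shows "length ((s ^^ j) w) \<le> length ((s ^^ (j + i)) w)"
proof (induction i)
  case 0 then show ?case by simp
next
  case (Suc i)
  have "length ((s ^^ (j + i)) w) \<le> length (s ((s ^^ (j + i)) w))"
    using assms unfolding lgood_def by blast
  then show ?case using Suc by simp
qed

theorem mainTheorem9:
  fixes tr :: "'q::finite \<Rightarrow> 'a::finite \<Rightarrow> 'q"
    and out :: "'q \<Rightarrow> 'a \<Rightarrow> 'a list"
    and s :: "'a list \<Rightarrow> 'a list"
    and m n p :: nat
  assumes "expanding out"
    and "s \<in> aut_sg tr out"
    and "1 \<le> m" and "m < n"
    and "s ^^ m = s ^^ n"
    and "inj_on (\<lambda>i. s ^^ i) {1..<n}"
    and "prime p" and "p dvd (n - m)"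
  shows "p dvd fact (card (UNIV :: 'a set))"
proof (rule ccontr)
  assume nd: "\<not> p dvd fact (card (UNIV :: 'a set))"
  then have pc: "card (UNIV :: 'a set) < p" using prime_dvd_fact_iff[OF assms(7)] by simp
  have gs: "good s" using good_aut[OF assms(1,2)] .
  then have lg: "lgood s" unfolding good_def by simp
  define X where "X = range (s ^^ m)"
  have Xs: "s y \<in> X \<and> length (s y) = length y \<and> (\<forall>l. take l (s y) = s (take l y))"
    if yX: "y \<in> X" for y
  proof -
    obtain w where w: "y = (s ^^ m) w" using yX unfolding X_def by blast
    have "s y = (s ^^ m) (s w)" using w by (simp add: funpow_swap1)
    then have "s y \<in> X" unfolding X_def by simp
    moreover have "length (s y) = length y"
    proof -
      have a: "length ((s ^^ m) w) \<le> length ((s ^^ (m + 1)) w)" by (rule len_mono[OF lg])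
      have b: "length ((s ^^ (m + 1)) w) \<le> length ((s ^^ (m + 1 + (n - m - 1))) w)" by (rule len_mono[OF lg])
      have "m + 1 + (n - m - 1) = n" using assms(4) by simp
      then have "length ((s ^^ (m + 1)) w) \<le> length ((s ^^ m) w)" using b assms(5) by simp
      with a have "length ((s ^^ (m + 1)) w) = length ((s ^^ m) w)" by simp
      then show ?thesis using w by simp
    qed
    moreover have "\<forall>l. take l (s y) = s (take l y)"
      using good_take[OF gs] calculation(2) by blast
    ultimately show ?thesis by blast
  qed
  define c where "c = (n - m) div p"
  have p2: "p \<ge> 2" using assms(7) prime_ge_2_nat by blast
  have kpos: "n - m > 0" using assms(4) by simp
  have "p \<le> n - m" using assms(8) kpos by (simp add: dvd_imp_le)
  have c2: "c < n - m" unfolding c_def using p2 kpos by simp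
  have cp: "c * p = n - m" unfolding c_def using assms(8) by simp
  have c1: "c \<ge> 1" using cp kpos by (cases c) auto
  have Xg: "(s ^^ c) y \<in> X \<and> length ((s ^^ c) y) = length y \<and> (\<forall>l. take l ((s ^^ c) y) = (s ^^ c) (take l y))"
    if "y \<in> X" for y
    using iter_props[of X s, OF Xs that] by blast
  have fixw: "(s ^^ c) ((s ^^ m) w) = (s ^^ m) w" for w
  proof -
    have vX: "(s ^^ m) w \<in> X" unfolding X_def by simp
    have cpm: "c * p + m = n" using cp assms(4) by simp
    have "((s ^^ c) ^^ p) ((s ^^ m) w) = (s ^^ (c * p + m)) w"
      by (simp only: funpow_mult funpow_add comp_apply)
    also have "\<dots> = (s ^^ n) w" by (simp only: cpm)
    also have "\<dots> = (s ^^ m) w" using assms(5) by (simp only:)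
    finally have per: "((s ^^ c) ^^ p) ((s ^^ m) w) = (s ^^ m) w" .
    show ?thesis by (rule keyA[of X "s ^^ c", OF Xg assms(7) pc vX per])
  qed
  have "s ^^ (c + m) = s ^^ m"
  proof
    fix w show "(s ^^ (c + m)) w = (s ^^ m) w" using fixw[of w] by (simp only: funpow_add comp_apply)
  qed
  moreover have "c + m \<in> {1..<n}" "m \<in> {1..<n}" using c1 c2 assms(3,4) by auto
  ultimately have "c + m = m" using assms(6) unfolding inj_on_def by blast
  then show False using c1 by simp
qed

end
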